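(* Let $(\mathcal V,\{C_n\}_n,e)$ be an operator system and let $p\in\mathcal V$ be a nonzero positive contraction ($0\le p\le e$). Then $\alpha_m(p)=1$ if and only if $p\notin J_p$.
   Context: $\alpha_m(x)=\sup\{|\varphi(x)|:\varphi\text{ a state on }\mathcal V\}$ is the minimal order norm. $C(p)=\{x\in\mathcal V: x=x^*,\ \forall\epsilon>0\ \exists t>0\text{ such that } x+\epsilon p+t(e-p)\in C_1\}$ and $J_p=\operatorname{span}(C(p)\cap-C(p))$. *)

theory Defs
  imports Complex_Main
begin

text \<open>Matrices over V are modelled as functions nat => nat => 'v; an n x n matrix
  is one whose entries vanish outside the index range {0..<n}.\<close>

definition is_mat :: "nat \<Rightarrow> (nat \<Rightarrow> nat \<Rightarrow> 'v::zero) \<Rightarrow> bool" where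
  "is_mat n X \<longleftrightarrow> (\<forall>i j. (n \<le> i \<or> n \<le> j) \<longrightarrow> X i j = 0)"

definition mat_herm :: "('v \<Rightarrow> 'v) \<Rightarrow> nat \<Rightarrow> (nat \<Rightarrow> nat \<Rightarrow> 'v) \<Rightarrow> bool" where
  "mat_herm star n X \<longleftrightarrow> (\<forall>i<n. \<forall>j<n. X j i = star (X i j))"

text \<open>alpha^* X alpha for alpha an n x m scalar matrix and X an n x n matrix over V.\<close>
definition congr_mat :: "(complex \<Rightarrow> 'v \<Rightarrow> 'v) \<Rightarrow> nat \<Rightarrow> nat \<Rightarrow> (nat \<Rightarrow> nat \<Rightarrow> complex)
    \<Rightarrow> (nat \<Rightarrow> nat \<Rightarrow> 'v::ab_group_add) \<Rightarrow> nat \<Rightarrow> nat \<Rightarrow> 'v" where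
  "congr_mat scl n m \<alpha> X = (\<lambda>i j. if i < m \<and> j < m
      then (\<Sum>k<n. \<Sum>l<n. scl (cnj (\<alpha> k i) * \<alpha> l j) (X k l)) else 0)"

definition diag_e :: "nat \<Rightarrow> 'v::zero \<Rightarrow> nat \<Rightarrow> nat \<Rightarrow> 'v" where
  "diag_e n e = (\<lambda>i j. if i < n \<and> i = j then e else 0)"

text \<open>Operator system (V, {C_n}, e): a complex *-vector space with a matrix ordering
  (proper cones of hermitian matrices, compatible under alpha^* . alpha) for which e is
  an Archimedean matrix order unit.\<close>
definition operator_system :: "(complex \<Rightarrow> 'v::ab_group_add \<Rightarrow> 'v) \<Rightarrow> ('v \<Rightarrow> 'v)
    \<Rightarrow> (nat \<Rightarrow> (nat \<Rightarrow> nat \<Rightarrow> 'v) set) \<Rightarrow> 'v \<Rightarrow> bool" where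
  "operator_system scl star C e \<longleftrightarrow>
     vector_space scl \<and>
     (\<forall>x. star (star x) = x) \<and>
     (\<forall>x y. star (x + y) = star x + star y) \<and>
     (\<forall>c x. star (scl c x) = scl (cnj c) (star x)) \<and>
     star e = e \<and>
     (\<forall>n\<ge>1. C n \<subseteq> {X. is_mat n X \<and> mat_herm star n X}) \<and>
     (\<forall>n\<ge>1. \<forall>X\<in>C n. \<forall>Y\<in>C n. (\<lambda>i j. X i j + Y i j) \<in> C n) \<and>
     (\<forall>n\<ge>1. \<forall>X\<in>C n. \<forall>t::real. 0 \<le> t \<longrightarrow> (\<lambda>i j. scl (complex_of_real t) (X i j)) \<in> C n) \<and>
     (\<forall>n\<ge>1. \<forall>X\<in>C n. (\<lambda>i j. - X i j) \<in> C n \<longrightarrow> X = (\<lambda>i j. 0)) \<and>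
     (\<forall>n\<ge>1. \<forall>m\<ge>1. \<forall>\<alpha>. \<forall>X\<in>C n. congr_mat scl n m \<alpha> X \<in> C m) \<and>
     (\<forall>n\<ge>1. \<forall>X. is_mat n X \<and> mat_herm star n X \<longrightarrow>
        (\<exists>r::real>0. (\<lambda>i j. scl (complex_of_real r) (diag_e n e i j) + X i j) \<in> C n)) \<and>
     (\<forall>n\<ge>1. \<forall>X. is_mat n X \<and> mat_herm star n X \<and>
        (\<forall>r::real>0. (\<lambda>i j. scl (complex_of_real r) (diag_e n e i j) + X i j) \<in> C n)
        \<longrightarrow> X \<in> C n)"

definition mat1 :: "'v::zero \<Rightarrow> nat \<Rightarrow> nat \<Rightarrow> 'v" where
  "mat1 x = (\<lambda>i j. if i = 0 \<and> j = 0 then x else 0)"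

text \<open>x belongs to C_1 (identifying V with M_1(V)).\<close>
definition pos1 :: "(nat \<Rightarrow> (nat \<Rightarrow> nat \<Rightarrow> 'v::zero) set) \<Rightarrow> 'v \<Rightarrow> bool" where
  "pos1 C x \<longleftrightarrow> mat1 x \<in> C 1"

definition is_state :: "(complex \<Rightarrow> 'v::ab_group_add \<Rightarrow> 'v) \<Rightarrow> (nat \<Rightarrow> (nat \<Rightarrow> nat \<Rightarrow> 'v) set)
    \<Rightarrow> 'v \<Rightarrow> ('v \<Rightarrow> complex) \<Rightarrow> bool" where
  "is_state scl C e \<phi> \<longleftrightarrow> Vector_Spaces.linear scl (*) \<phi> \<and>
     (\<forall>x. pos1 C x \<longrightarrow> \<phi> x \<in> \<real> \<and> 0 \<le> Re (\<phi> x)) \<and> \<phi> e = 1"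

definition alpha_m :: "(complex \<Rightarrow> 'v::ab_group_add \<Rightarrow> 'v) \<Rightarrow> (nat \<Rightarrow> (nat \<Rightarrow> nat \<Rightarrow> 'v) set)
    \<Rightarrow> 'v \<Rightarrow> 'v \<Rightarrow> real" where
  "alpha_m scl C e x = Sup {cmod (\<phi> x) | \<phi>. is_state scl C e \<phi>}"

definition Cp :: "(complex \<Rightarrow> 'v::ab_group_add \<Rightarrow> 'v) \<Rightarrow> ('v \<Rightarrow> 'v)
    \<Rightarrow> (nat \<Rightarrow> (nat \<Rightarrow> nat \<Rightarrow> 'v) set) \<Rightarrow> 'v \<Rightarrow> 'v \<Rightarrow> 'v set" where
  "Cp scl star C e p = {x. star x = x \<and> (\<forall>\<epsilon>::real>0. \<exists>t::real>0.
      pos1 C (x + scl (complex_of_real \<epsilon>) p + scl (complex_of_real t) (e - p)))}"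

definition Jp :: "(complex \<Rightarrow> 'v::ab_group_add \<Rightarrow> 'v) \<Rightarrow> ('v \<Rightarrow> 'v)
    \<Rightarrow> (nat \<Rightarrow> (nat \<Rightarrow> nat \<Rightarrow> 'v) set) \<Rightarrow> 'v \<Rightarrow> 'v \<Rightarrow> 'v set" where
  "Jp scl star C e p = module.span scl (Cp scl star C e p \<inter> uminus ` Cp scl star C e p)"

end

theory Submission
  imports Defs
begin

locale rcone =
  fixes sm :: "real \<Rightarrow> 'v::ab_group_add \<Rightarrow> 'v" and H K :: "'v set" and u :: 'v
  assumes sm_add: "sm a (x + y) = sm a x + sm a y"
    and sm_ladd: "sm (a + b) x = sm a x + sm b x"
    and sm_sm: "sm a (sm b x) = sm (a * b) x"
    and sm_one: "sm 1 x = x"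
    and H_add: "x \<in> H \<Longrightarrow> y \<in> H \<Longrightarrow> x + y \<in> H"
    and H_sm: "x \<in> H \<Longrightarrow> sm a x \<in> H"
    and K_H: "K \<subseteq> H"
    and K_add: "x \<in> K \<Longrightarrow> y \<in> K \<Longrightarrow> x + y \<in> K"
    and K_sm: "x \<in> K \<Longrightarrow> 0 \<le> a \<Longrightarrow> sm a x \<in> K"
    and u_H: "u \<in> H"
    and unit: "x \<in> H \<Longrightarrow> \<exists>r. sm r u - x \<in> K"
    and uprop: "- u \<notin> K"
begin

sublocale module sm
  by unfold_locales (auto simp: sm_add sm_ladd sm_sm sm_one)

lemma sm_neg1: "sm (-1) x = - x" by simp

definition good :: "('v \<times> real) set \<Rightarrow> bool" where
  "good G \<longleftrightarrow> fst ` G \<subseteq> H \<and> (\<forall>x a b. (x,a)\<in>G \<longrightarrow> (x,b)\<in>G \<longrightarrow> a = b)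
    \<and> (\<forall>x a y b. (x,a)\<in>G \<longrightarrow> (y,b)\<in>G \<longrightarrow> (x+y,a+b)\<in>G)
    \<and> (\<forall>x a r. (x,a)\<in>G \<longrightarrow> (sm r x, r*a)\<in>G) \<and> (u,1)\<in>G
    \<and> (\<forall>x a. (x,a)\<in>G \<longrightarrow> x\<in>K \<longrightarrow> 0 \<le> a)"

lemma u_ne: "u \<noteq> 0"
proof
  assume "u = 0"
  obtain r where "sm r u - u \<in> K" using unit[OF u_H] by blast
  then have "sm 0 (sm r u - u) \<in> K" using K_sm by blast
  then show False using uprop \<open>u = 0\<close> by simp
qed

lemma sm_u_inj: "sm a u = sm b u \<Longrightarrow> a = b"
proof (rule ccontr)
  assume h: "sm a u = sm b u" "a \<noteq> b"
  then have "sm (a - b) u = 0" by (simp add: scale_left_diff_distrib)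
  then have "sm (1/(a-b)) (sm (a - b) u) = 0" by simp
  with h have "u = 0" by (simp add: sm_sm)
  with u_ne show False by simp
qed

lemma good_G0: "good {(sm r u, r) | r. True}"
  unfolding good_def
proof (intro conjI allI impI)
  show "fst ` {(sm r u, r) |r. True} \<subseteq> H" using H_sm u_H by auto
  show "(u, 1) \<in> {(sm r u, r) |r. True}" by force
next
  fix x a b assume "(x,a) \<in> {(sm r u, r) |r. True}" "(x,b) \<in> {(sm r u, r) |r. True}"
  then show "a = b" using sm_u_inj by auto
next
  fix x a y b assume "(x,a) \<in> {(sm r u, r) |r. True}" "(y,b) \<in> {(sm r u, r) |r. True}"
  then show "(x+y, a+b) \<in> {(sm r u, r) |r. True}" by (auto simp: sm_ladd)
next
  fix x a r assume "(x,a) \<in> {(sm r u, r) |r. True}"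
  then show "(sm r x, r*a) \<in> {(sm r u, r) |r. True}" by (auto simp: sm_sm)
next
  fix x a assume "(x,a) \<in> {(sm r u, r) |r. True}" "x \<in> K"
  then have x: "x = sm a u" "x \<in> K" by auto
  show "0 \<le> a"
  proof (rule ccontr)
    assume "\<not> 0 \<le> a"
    then have "sm (-1/a) x \<in> K" using x(2) by (intro K_sm) auto
    moreover have "sm (-1/a) x = - u" using x \<open>\<not> 0 \<le> a\<close> by (simp add: sm_sm)
    ultimately have "- u \<in> K" by simp
    with uprop show False by simp
  qed
qed

lemma good_minus: "good G \<Longrightarrow> (x,a)\<in>G \<Longrightarrow> (-x, -a) \<in> G"
  unfolding good_def by (metis mult_minus1 sm_neg1)

lemma good_zero: "good G \<Longrightarrow> (0,0)\<in>G"
  unfolding good_def by (metis mult_zero_left scale_zero_left)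

lemma good_diff: assumes "good G" "(x,a)\<in>G" "(y,b)\<in>G" shows "(x - y, a - b) \<in> G"
proof -
  have "(-y,-b) \<in> G" using good_minus assms by blast
  then have "(x + - y, a + - b) \<in> G" using assms unfolding good_def by blast
  then show ?thesis by simp
qed

lemma extend:
  assumes g: "good G" and x0H: "x0 \<in> H" and x0n: "x0 \<notin> fst ` G"
  shows "\<exists>G'. good G' \<and> G \<subseteq> G' \<and> G' \<noteq> G"
proof -
  define L where "L = {a. \<exists>m. (m,a)\<in>G \<and> x0 - m \<in> K}"
  define U where "U = {b. \<exists>m. (m,b)\<in>G \<and> m - x0 \<in> K}"
  have gG: "(x,a)\<in>G \<Longrightarrow> (sm r x, r*a)\<in>G" for x a r using g unfolding good_def by blast
  have gu: "(u,1)\<in>G" using g unfolding good_def by blast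
  have gpos: "(x,a)\<in>G \<Longrightarrow> x\<in>K \<Longrightarrow> 0 \<le> a" for x a using g unfolding good_def by blast
  have gfun: "(x,a)\<in>G \<Longrightarrow> (x,b)\<in>G \<Longrightarrow> a = b" for x a b using g unfolding good_def by blast
  have gadd: "(x,a)\<in>G \<Longrightarrow> (y,b)\<in>G \<Longrightarrow> (x+y,a+b)\<in>G" for x a y b using g unfolding good_def by blast
  have fG: "fst ` G \<subseteq> H" using g unfolding good_def by blast
  have gH: "x \<in> H" if "(x,a)\<in>G" for x a
  proof -
    have "x \<in> fst ` G" by (rule image_eqI[where x="(x,a)"]) (simp_all add: that)
    then show ?thesis using fG by blast
  qed
  have "- x0 \<in> H" using H_sm[OF x0H, of "-1"] by simp
  then obtain r1 where r1: "sm r1 u - (- x0) \<in> K" using unit by blast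
  have "(sm (-r1) u, -r1 * 1) \<in> G" by (rule gG[OF gu])
  moreover have "x0 - sm (-r1) u \<in> K" using r1 by (simp add: algebra_simps)
  ultimately have Lne: "-r1 \<in> L" unfolding L_def by auto
  obtain r2 where r2: "sm r2 u - x0 \<in> K" using unit[OF x0H] by blast
  have "(sm r2 u, r2 * 1) \<in> G" by (rule gG[OF gu])
  then have Une: "r2 \<in> U" using r2 unfolding U_def by auto
  have LU: "a \<le> b" if aL: "a \<in> L" and bU: "b \<in> U" for a b
  proof -
    obtain m where m: "(m,a)\<in>G" "x0 - m \<in> K" using aL unfolding L_def by auto
    obtain m' where m': "(m',b)\<in>G" "m' - x0 \<in> K" using bU unfolding U_def by auto
    have "(m' - m, b - a) \<in> G" using good_diff[OF g m'(1) m(1)] .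
    moreover have "m' - m \<in> K" using K_add[OF m'(2) m(2)] by (simp add: algebra_simps)
    ultimately show ?thesis using gpos by fastforce
  qed
  define c where "c = Sup L"
  have bddL: "bdd_above L" using LU Une unfolding bdd_above_def by blast
  have Lc: "a \<le> c" if "a \<in> L" for a unfolding c_def using cSup_upper[OF that bddL] .
  have cU: "c \<le> b" if "b \<in> U" for b unfolding c_def using LU that Lne by (intro cSup_least) auto
  define G' where "G' = {(m + sm l x0, a + l*c) | m a l. (m,a)\<in>G}"
  have notin: "sm l x0 \<noteq> m' - m" if "(m,a)\<in>G" "(m',a')\<in>G" "l \<noteq> 0" for m a m' a' l
  proof
    assume h: "sm l x0 = m' - m"
    have "(m' - m, a' - a) \<in> G" using good_diff[OF g that(2) that(1)] .
    then have "(sm (1/l) (m' - m), (1/l) * (a' - a)) \<in> G" by (rule gG)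
    moreover have "sm (1/l) (m' - m) = x0" unfolding h[symmetric] using that(3) by (simp add: sm_sm)
    ultimately show False using x0n by force
  qed
  have "good G'"
    unfolding good_def
  proof (intro conjI allI impI)
    show "fst ` G' \<subseteq> H" unfolding G'_def using gH H_add H_sm x0H by fastforce
  next
    fix x a b assume "(x,a)\<in>G'" "(x,b)\<in>G'"
    then obtain m a1 l m' a1' l' where A: "x = m + sm l x0" "a = a1 + l*c" "(m,a1)\<in>G"
      and B: "x = m' + sm l' x0" "b = a1' + l'*c" "(m',a1')\<in>G" unfolding G'_def by blast
    have "sm (l - l') x0 = m' - m" using A(1) B(1) unfolding scale_left_diff_distrib by (metis add_diff_cancel_left add_diff_cancel_right' diff_add_eq)
    then have "l = l'" using notin[OF A(3) B(3), of "l - l'"] by auto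
    then have "m = m'" using A(1) B(1) by simp
    then show "a = b" using A B gfun \<open>l = l'\<close> by blast
  next
    fix x a y b assume "(x,a)\<in>G'" "(y,b)\<in>G'"
    then obtain m a1 l m' a1' l' where A: "x = m + sm l x0" "a = a1 + l*c" "(m,a1)\<in>G"
      and B: "y = m' + sm l' x0" "b = a1' + l'*c" "(m',a1')\<in>G" unfolding G'_def by blast
    have e1: "x + y = (m + m') + sm (l + l') x0" using A B by (simp add: scale_left_distrib add_ac)
    have e2: "a + b = (a1 + a1') + (l+l')*c" using A B by (simp add: algebra_simps)
    from e1 e2 show "(x+y, a+b) \<in> G'" unfolding G'_def using gadd[OF A(3) B(3)] by blast
  next
    fix x a r assume "(x,a)\<in>G'"
    then obtain m a1 l where A: "x = m + sm l x0" "a = a1 + l*c" "(m,a1)\<in>G" unfolding G'_def by blast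
    have e1: "sm r x = sm r m + sm (r*l) x0" using A by (simp add: scale_right_distrib)
    have e2: "r * a = r*a1 + (r*l)*c" using A by (simp add: algebra_simps)
    from e1 e2 show "(sm r x, r*a) \<in> G'" unfolding G'_def using gG[OF A(3)] by blast
  next
    have "u = u + sm 0 x0" "(1::real) = 1 + 0 * c" by simp_all
    then show "(u,1)\<in>G'" unfolding G'_def using gu by blast
  next
    fix x a assume xa: "(x,a)\<in>G'" and xK: "x \<in> K"
    then obtain m a1 l where A: "x = m + sm l x0" "a = a1 + l*c" "(m,a1)\<in>G" unfolding G'_def by blast
    consider "l = 0" | "l > 0" | "l < 0" by linarith
    then show "0 \<le> a"
    proof cases
      case 1 then show ?thesis using A xK gpos by auto
    next
      case 2
      have "sm (1/l) x \<in> K" using xK 2 by (intro K_sm) auto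
      moreover have "sm (1/l) x = x0 - sm (-1/l) m" using A 2 by (simp add: scale_right_distrib)
      moreover have "(sm (-1/l) m, (-1/l)*a1) \<in> G" using gG[OF A(3)] .
      ultimately have "(-1/l)*a1 \<in> L" unfolding L_def by auto
      then have "(-1/l)*a1 \<le> c" by (rule Lc)
      then have "-a1 \<le> l * c" using 2 by (simp add: field_simps)
      then show ?thesis using A by simp
    next
      case 3
      have "sm (-1/l) x \<in> K" using xK 3 by (intro K_sm) auto
      moreover have "sm (-1/l) x = sm (-1/l) m - x0" using A 3 by (simp add: scale_right_distrib)
      moreover have "(sm (-1/l) m, (-1/l)*a1) \<in> G" using gG[OF A(3)] .
      ultimately have "(-1/l)*a1 \<in> U" unfolding U_def by auto
      then have "c \<le> (-1/l)*a1" by (rule cU)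
      then have "-l * c \<le> a1" using 3 by (simp add: field_simps)
      then show ?thesis using A by simp
    qed
  qed
  moreover have "G \<subseteq> G'"
  proof
    fix z assume "z \<in> G"
    then obtain m a where "z = (m,a)" "(m,a)\<in>G" by (cases z) auto
    moreover have "m = m + sm 0 x0" "a = a + 0*c" by simp_all
    ultimately show "z \<in> G'" unfolding G'_def by blast
  qed
  moreover have "(x0, c) \<in> G'"
  proof -
    have "x0 = 0 + sm 1 x0" "c = 0 + 1*c" by simp_all
    then show ?thesis unfolding G'_def using good_zero[OF g] by blast
  qed
  then have "G' \<noteq> G" using x0n by force
  ultimately show ?thesis by blast
qed

lemma good_Union:
  assumes ne: "C \<noteq> {}" and CA: "\<And>G. G \<in> C \<Longrightarrow> good G" and ch: "chain\<^sub>\<subseteq> C"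
  shows "good (\<Union>C)"
proof -
  have two: "\<exists>G\<in>C. p \<in> G \<and> q \<in> G" if hpq: "p \<in> \<Union>C" "q \<in> \<Union>C" for p q
  proof -
    obtain G1 G2 where "G1 \<in> C" "G2 \<in> C" "p \<in> G1" "q \<in> G2" using hpq by blast
    then show ?thesis using ch unfolding chain_subset_def by blast
  qed
  show ?thesis unfolding good_def
  proof (intro conjI allI impI)
    show "fst ` \<Union>C \<subseteq> H" using CA unfolding good_def by blast
  next
    fix x a b assume "(x,a)\<in>\<Union>C" "(x,b)\<in>\<Union>C"
    then obtain G where "G\<in>C" "(x,a)\<in>G" "(x,b)\<in>G" using two by blast
    then show "a = b" using CA unfolding good_def by blast
  next
    fix x a y b assume "(x,a)\<in>\<Union>C" "(y,b)\<in>\<Union>C"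
    then obtain G where "G\<in>C" "(x,a)\<in>G" "(y,b)\<in>G" using two by blast
    then show "(x+y,a+b)\<in>\<Union>C" using CA unfolding good_def by blast
  next
    fix x a r assume "(x,a)\<in>\<Union>C"
    then obtain G where "G\<in>C" "(x,a)\<in>G" by blast
    then show "(sm r x, r*a)\<in>\<Union>C" using CA unfolding good_def by blast
  next
    obtain G where "G \<in> C" using ne by blast
    then show "(u,1)\<in>\<Union>C" using CA unfolding good_def by blast
  next
    fix x a assume "(x,a)\<in>\<Union>C" "x \<in> K"
    then obtain G where "G\<in>C" "(x,a)\<in>G" by blast
    then show "0 \<le> a" using CA \<open>x \<in> K\<close> unfolding good_def by blast
  qed
qed

lemma riesz:
  "\<exists>f. (\<forall>x\<in>H. \<forall>y\<in>H. f (x+y) = f x + f y) \<and> (\<forall>x\<in>H. \<forall>r. f (sm r x) = r * f x)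
     \<and> (\<forall>x\<in>K. 0 \<le> f x) \<and> f u = 1"
proof -
  have "\<exists>M\<in>{G. good G}. \<forall>X\<in>{G. good G}. M \<subseteq> X \<longrightarrow> X = M"
  proof (rule Zorn_Lemma2, intro ballI)
    fix C assume C: "C \<in> chains {G. good G}"
    show "\<exists>U\<in>{G. good G}. \<forall>X\<in>C. X \<subseteq> U"
    proof (cases "C = {}")
      case True then show ?thesis using good_G0 by blast
    next
      case False
      have "good (\<Union>C)" using C False by (intro good_Union) (auto simp: chains_def)
      then show ?thesis by blast
    qed
  qed
  then obtain M where gM: "good M" and maxM: "\<And>X. good X \<Longrightarrow> M \<subseteq> X \<Longrightarrow> X = M" by blast
  have tot: "\<exists>a. (x,a)\<in>M" if xH: "x \<in> H" for x
  proof (rule ccontr)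
    assume "\<not> (\<exists>a. (x,a)\<in>M)"
    then have "x \<notin> fst ` M" by force
    then obtain G' where "good G'" "M \<subseteq> G'" "G' \<noteq> M" using extend[OF gM xH] by blast
    then show False using maxM by blast
  qed
  have fnM: "a = b" if "(x,a)\<in>M" "(x,b)\<in>M" for x a b using gM that unfolding good_def by metis
  have Madd: "(x,a)\<in>M \<Longrightarrow> (y,b)\<in>M \<Longrightarrow> (x+y,a+b)\<in>M" for x a y b using gM unfolding good_def by metis
  have Msm: "(x,a)\<in>M \<Longrightarrow> (sm r x, r*a)\<in>M" for x a r using gM unfolding good_def by metis
  have Mpos: "(x,a)\<in>M \<Longrightarrow> x\<in>K \<Longrightarrow> 0 \<le> a" for x a using gM unfolding good_def by metis
  have Mu: "(u,1)\<in>M" using gM unfolding good_def by metis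
  define f where "f x = (THE a. (x,a)\<in>M)" for x
  have fval: "f x = a" if "(x,a)\<in>M" for x a unfolding f_def using that fnM by (intro the_equality)
  have fM: "(x, f x) \<in> M" if xH: "x \<in> H" for x
  proof -
    obtain a where a: "(x,a)\<in>M" using tot[OF xH] by blast
    have "f x = a" using fval[OF a] .
    then show ?thesis using a by simp
  qed
  show ?thesis
  proof (intro exI conjI ballI allI)
    fix x y assume "x \<in> H" "y \<in> H"
    then have "(x+y, f x + f y) \<in> M" using fM Madd by simp
    then show "f (x+y) = f x + f y" by (rule fval)
  next
    fix x r assume "x \<in> H"
    then have "(sm r x, r * f x) \<in> M" using fM Msm by simp
    then show "f (sm r x) = r * f x" by (rule fval)
  next
    fix x assume "x \<in> K"
    then show "0 \<le> f x" using fM Mpos K_H by blast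
  next
    show "f u = 1" using Mu by (rule fval)
  qed
qed

end

locale opsys =
  fixes scl :: "complex \<Rightarrow> 'v::ab_group_add \<Rightarrow> 'v" and star :: "'v \<Rightarrow> 'v"
    and C :: "nat \<Rightarrow> (nat \<Rightarrow> nat \<Rightarrow> 'v) set" and e :: 'v
  assumes os: "operator_system scl star C e"
begin

lemmas osc = os[unfolded operator_system_def]
lemma vs: "vector_space scl" by (rule osc[THEN conjunct1])

sublocale vector_space scl by (rule vs)

lemma star_star: "star (star x) = x" using osc[THEN conjunct2, THEN conjunct1] by blast
lemma star_add: "star (x + y) = star x + star y" using osc[THEN conjunct2, THEN conjunct2, THEN conjunct1] by blast
lemma star_scl: "star (scl c x) = scl (cnj c) (star x)" using osc[THEN conjunct2, THEN conjunct2, THEN conjunct2, THEN conjunct1] by blast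
lemma star_e: "star e = e" using osc[THEN conjunct2, THEN conjunct2, THEN conjunct2, THEN conjunct2, THEN conjunct1] by blast
lemma osC: "\<forall>n\<ge>1. C n \<subseteq> {X. is_mat n X \<and> mat_herm star n X}" by (rule osc[THEN conjunct2, THEN conjunct2, THEN conjunct2, THEN conjunct2, THEN conjunct2, THEN conjunct1])
lemma osadd: "\<forall>n\<ge>1. \<forall>X\<in>C n. \<forall>Y\<in>C n. (\<lambda>i j. X i j + Y i j) \<in> C n" by (rule osc[THEN conjunct2, THEN conjunct2, THEN conjunct2, THEN conjunct2, THEN conjunct2, THEN conjunct2, THEN conjunct1])
lemma ossc: "\<forall>n\<ge>1. \<forall>X\<in>C n. \<forall>t::real. 0 \<le> t \<longrightarrow> (\<lambda>i j. scl (complex_of_real t) (X i j)) \<in> C n" by (rule osc[THEN conjunct2, THEN conjunct2, THEN conjunct2, THEN conjunct2, THEN conjunct2, THEN conjunct2, THEN conjunct2, THEN conjunct1])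
lemma osprop: "\<forall>n\<ge>1. \<forall>X\<in>C n. (\<lambda>i j. - X i j) \<in> C n \<longrightarrow> X = (\<lambda>i j. 0)" by (rule osc[THEN conjunct2, THEN conjunct2, THEN conjunct2, THEN conjunct2, THEN conjunct2, THEN conjunct2, THEN conjunct2, THEN conjunct2, THEN conjunct1])
lemma osunit: "\<forall>n\<ge>1. \<forall>X. is_mat n X \<and> mat_herm star n X \<longrightarrow>
        (\<exists>r::real>0. (\<lambda>i j. scl (complex_of_real r) (diag_e n e i j) + X i j) \<in> C n)" by (rule osc[THEN conjunct2, THEN conjunct2, THEN conjunct2, THEN conjunct2, THEN conjunct2, THEN conjunct2, THEN conjunct2, THEN conjunct2, THEN conjunct2, THEN conjunct2, THEN conjunct1])
lemma star_zero: "star 0 = 0" using star_add[of 0 0] by simp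
lemma star_minus: "star (- x) = - star x"
proof -
  have "star x + star (- x) = 0" using star_add[of x "- x"] star_zero by simp
  then show ?thesis by (rule minus_unique[symmetric])
qed
lemma star_diff: "star (x - y) = star x - star y"
  using star_add[of x "- y"] star_minus by simp
lemma star_sc: "star (scl (complex_of_real r) x) = scl (complex_of_real r) (star x)"
  by (simp add: star_scl)

lemma C1: "C 1 \<subseteq> {X. is_mat 1 X \<and> mat_herm star 1 X}" using osC by simp

lemma pos_herm: "pos1 C x \<Longrightarrow> star x = x"
proof -
  assume "pos1 C x"
  then have "mat_herm star 1 (mat1 x)" using C1 unfolding pos1_def by auto
  then show ?thesis unfolding mat_herm_def mat1_def by auto
qed

lemma pos_add: assumes "pos1 C x" "pos1 C y" shows "pos1 C (x + y)"
proof -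
  have "(\<lambda>i j. mat1 x i j + mat1 y i j) \<in> C 1" using osadd assms unfolding pos1_def by simp
  moreover have "(\<lambda>i j. mat1 x i j + mat1 y i j) = mat1 (x + y)" unfolding mat1_def by (auto intro!: ext)
  ultimately show ?thesis unfolding pos1_def by simp
qed

lemma pos_sc: assumes "pos1 C x" "0 \<le> t" shows "pos1 C (scl (complex_of_real t) x)"
proof -
  have "(\<lambda>i j. scl (complex_of_real t) (mat1 x i j)) \<in> C 1" using ossc assms unfolding pos1_def by simp
  moreover have "(\<lambda>i j. scl (complex_of_real t) (mat1 x i j)) = mat1 (scl (complex_of_real t) x)" unfolding mat1_def by (auto intro!: ext)
  ultimately show ?thesis unfolding pos1_def by simp
qed

lemma pos_proper: assumes "pos1 C x" "pos1 C (- x)" shows "x = 0"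
proof -
  have "(\<lambda>i j. - mat1 x i j) = mat1 (- x)" unfolding mat1_def by (auto intro!: ext)
  then have "(\<lambda>i j. mat1 x i j) = (\<lambda>i j. 0)" using osprop[rule_format, of 1 "mat1 x"] assms unfolding pos1_def by simp
  then have "mat1 x 0 0 = 0" by metis
  then show ?thesis unfolding mat1_def by simp
qed

lemma ounit: assumes "star x = x" shows "\<exists>r>0. pos1 C (scl (complex_of_real r) e + x)"
proof -
  have im: "is_mat 1 (mat1 x)" unfolding is_mat_def mat1_def by auto
  have hm: "mat_herm star 1 (mat1 x)" unfolding mat_herm_def mat1_def using assms by auto
  obtain r :: real where r: "r > 0" "(\<lambda>i j. scl (complex_of_real r) (diag_e 1 e i j) + mat1 x i j) \<in> C 1"
    using osunit im hm by blast
  moreover have "(\<lambda>i j. scl (complex_of_real r) (diag_e 1 e i j) + mat1 x i j) = mat1 (scl (complex_of_real r) e + x)"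
    unfolding mat1_def diag_e_def by (auto intro!: ext)
  ultimately show ?thesis unfolding pos1_def by auto
qed

lemma comb6: "scl a x + scl a y - (scl c x - scl c y) = scl (a - c) x + scl (a + c) y"
proof -
  have g: "\<And>A B C D::'v. A + B - (C - D) = (A - C) + (B + D)" by (simp add: algebra_simps)
  show ?thesis unfolding g scale_left_diff_distrib scale_left_distrib ..
qed
lemma comb5: "scl a x + scl a y + (scl c x - scl c y) = scl (a + c) x + scl (a - c) y"
proof -
  have g: "\<And>A B C D::'v. A + B + (C - D) = (A + C) + (B - D)" by (simp add: algebra_simps)
  show ?thesis unfolding g scale_left_diff_distrib scale_left_distrib ..
qed
lemma half2: "scl (1/2) (x + x) = x"
proof -
  have "scl (1/2) (x + x) = scl (1/2 + 1/2) x" by (simp only: scale_right_distrib scale_left_distrib)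
  then show ?thesis by simp
qed

lemma vs_complex: "vector_space ((*) :: complex \<Rightarrow> complex \<Rightarrow> complex)"
  by unfold_locales (auto simp: algebra_simps)

lemma mk_state:
  fixes f :: "'v \<Rightarrow> real"
  assumes fadd: "\<And>x y. star x = x \<Longrightarrow> star y = y \<Longrightarrow> f (x+y) = f x + f y"
    and fsc: "\<And>x r. star x = x \<Longrightarrow> f (scl (complex_of_real r) x) = r * f x"
    and fpos: "\<And>x. pos1 C x \<Longrightarrow> 0 \<le> f x" and fe: "f e = 1"
  shows "\<exists>\<phi>. is_state scl C e \<phi> \<and> (\<forall>x. star x = x \<longrightarrow> \<phi> x = complex_of_real (f x))"
proof -
  define R where "R x = scl (1/2) (x + star x)" for x
  define I where "I x = scl (-\<i>/2) (x - star x)" for x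
  have RH: "star (R x) = R x" for x unfolding R_def by (simp add: star_scl star_add star_star add.commute)
  have IH: "star (I x) = I x" for x
  proof -
    have "star (I x) = scl (\<i>/2) (star x - x)" unfolding I_def by (simp add: star_scl star_diff star_star star_minus)
    also have "\<dots> = scl (-\<i>/2) (x - star x)"
    proof -
      have "scl (\<i>/2) (star x - x) = scl (\<i>/2) (- (x - star x))" by simp
      also have "\<dots> = scl (- (\<i>/2)) (x - star x)" by (simp only: scale_minus_right scale_minus_left)
      finally show ?thesis by simp
    qed
    finally show ?thesis unfolding I_def .
  qed
  have scH: "star (scl (complex_of_real r) x) = scl (complex_of_real r) x" if "star x = x" for x r
    using that by (simp add: star_sc)
  have f0: "f 0 = 0" using fadd[of 0 0] star_zero by simp
  have fneg: "f (- x) = - f x" if "star x = x" for x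
    using fsc[OF that, of "-1"] by simp
  have fdiff: "f (x - y) = f x - f y" if "star x = x" "star y = y" for x y
    using fadd[of x "- y"] fneg that star_minus by simp
  have Radd: "R (x + y) = R x + R y" for x y unfolding R_def by (simp add: star_add scale_right_distrib add_ac)
  have Iadd: "I (x + y) = I x + I y" for x y unfolding I_def by (simp add: star_add scale_right_diff_distrib scale_right_distrib algebra_simps)
  have Rscl: "R (scl c x) = scl (complex_of_real (Re c)) (R x) - scl (complex_of_real (Im c)) (I x)" for c x
  proof -
    have "R (scl c x) = scl (c/2) x + scl (cnj c/2) (star x)"
      unfolding R_def by (simp add: star_scl scale_right_distrib mult.commute)
    also have "\<dots> = scl (complex_of_real (Re c) * (1/2) - complex_of_real (Im c) * (-\<i>/2)) x
         + scl (complex_of_real (Re c) * (1/2) + complex_of_real (Im c) * (-\<i>/2)) (star x)"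
      by (intro arg_cong2[where f="(+)"] arg_cong2[where f=scl]) (simp_all add: complex_eq_iff)
    also have "\<dots> = scl (complex_of_real (Re c)) (R x) - scl (complex_of_real (Im c)) (I x)"
      unfolding R_def I_def by (simp only: scale_scale scale_right_distrib scale_right_diff_distrib comb6)
    finally show ?thesis .
  qed
  have Iscl: "I (scl c x) = scl (complex_of_real (Im c)) (R x) + scl (complex_of_real (Re c)) (I x)" for c x
  proof -
    have "I (scl c x) = scl (-\<i>/2 * c) x - scl (-\<i>/2 * cnj c) (star x)"
      unfolding I_def by (simp add: star_scl scale_right_diff_distrib)
    also have "\<dots> = scl (complex_of_real (Im c) * (1/2) + complex_of_real (Re c) * (-\<i>/2)) x
         + scl (complex_of_real (Im c) * (1/2) - complex_of_real (Re c) * (-\<i>/2)) (star x)"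
    proof -
      have "scl (-\<i>/2 * c) x - scl (-\<i>/2 * cnj c) (star x) = scl (-\<i>/2 * c) x + scl (\<i>/2 * cnj c) (star x)"
      proof -
        have "scl (-\<i>/2 * c) x - scl (-\<i>/2 * cnj c) (star x) = scl (-\<i>/2 * c) x + scl (- (-\<i>/2 * cnj c)) (star x)"
          by (simp only: diff_conv_add_uminus scale_minus_left)
        then show ?thesis by simp
      qed
      also have "\<dots> = scl (complex_of_real (Im c) * (1/2) + complex_of_real (Re c) * (-\<i>/2)) x
         + scl (complex_of_real (Im c) * (1/2) - complex_of_real (Re c) * (-\<i>/2)) (star x)"
        by (intro arg_cong2[where f="(+)"] arg_cong2[where f=scl]) (simp_all add: complex_eq_iff)
      finally show ?thesis .
    qed
    also have "\<dots> = scl (complex_of_real (Im c)) (R x) + scl (complex_of_real (Re c)) (I x)"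
      unfolding R_def I_def by (simp only: scale_scale scale_right_distrib scale_right_diff_distrib comb5)
    finally show ?thesis .
  qed
  define \<phi> where "\<phi> x = complex_of_real (f (R x)) + \<i> * complex_of_real (f (I x))" for x
  have herm: "\<phi> x = complex_of_real (f x)" if "star x = x" for x
  proof -
    have "R x = x" unfolding R_def using that half2 by simp
    moreover have "I x = 0" unfolding I_def using that by simp
    ultimately show ?thesis unfolding \<phi>_def using f0 by simp
  qed
  have lin: "Vector_Spaces.linear scl (*) \<phi>"
    unfolding Vector_Spaces.linear_iff
  proof (intro conjI allI vs vs_complex)
    fix x y show "\<phi> (x + y) = \<phi> x + \<phi> y"
      unfolding \<phi>_def Radd Iadd using fadd RH IH by (simp add: algebra_simps)
  next
    fix c x
    have a: "f (R (scl c x)) = Re c * f (R x) - Im c * f (I x)"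
      unfolding Rscl using fdiff fsc RH IH scH by simp
    have b: "f (I (scl c x)) = Im c * f (R x) + Re c * f (I x)"
      unfolding Iscl using fadd fsc RH IH scH by simp
    show "\<phi> (scl c x) = c * \<phi> x"
      unfolding \<phi>_def a b by (simp add: complex_eq_iff algebra_simps)
  qed
  have "is_state scl C e \<phi>"
    unfolding is_state_def
  proof (intro conjI allI impI lin)
    fix x assume "pos1 C x"
    then show "\<phi> x \<in> \<real>" "0 \<le> Re (\<phi> x)" using herm pos_herm fpos by auto
  next
    show "\<phi> e = 1" using herm star_e fe by simp
  qed
  then show ?thesis using herm by blast
qed

end

context opsys begin

abbreviation sc :: "real \<Rightarrow> 'v \<Rightarrow> 'v" where "sc r \<equiv> scl (complex_of_real r)"

lemma state_add: "is_state scl C e \<phi> \<Longrightarrow> \<phi> (x + y) = \<phi> x + \<phi> y"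
  unfolding is_state_def Vector_Spaces.linear_iff by blast
lemma state_scl: "is_state scl C e \<phi> \<Longrightarrow> \<phi> (scl c x) = c * \<phi> x"
  unfolding is_state_def Vector_Spaces.linear_iff by blast
lemma state_pos: "is_state scl C e \<phi> \<Longrightarrow> pos1 C x \<Longrightarrow> \<phi> x \<in> \<real> \<and> 0 \<le> Re (\<phi> x)"
  unfolding is_state_def by blast
lemma state_e: "is_state scl C e \<phi> \<Longrightarrow> \<phi> e = 1"
  unfolding is_state_def by blast
lemma state_minus: "is_state scl C e \<phi> \<Longrightarrow> \<phi> (- x) = - \<phi> x"
  using state_scl[of \<phi> "-1" x] by simp
lemma state_diff: "is_state scl C e \<phi> \<Longrightarrow> \<phi> (x - y) = \<phi> x - \<phi> y"
  using state_add[of \<phi> x "- y"] state_minus[of \<phi> y] by simp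

lemma pos_zero: "pos1 C 0"
proof -
  obtain r where "r > 0" "pos1 C (sc r e + 0)" using ounit[of 0] star_zero by blast
  then have "pos1 C (sc 0 (sc r e + 0))" using pos_sc by blast
  then show ?thesis by simp
qed

lemma in_Cp: "x \<in> Cp scl star C e p \<longleftrightarrow> star x = x \<and> (\<forall>\<epsilon>>0. \<exists>t>0. pos1 C (x + sc \<epsilon> p + sc t (e - p)))"
  unfolding Cp_def by simp

lemma two_sc: "sc 2 q = q + q"
proof -
  have "sc 2 q = sc (1 + 1) q" by simp
  also have "\<dots> = q + q" by (simp only: of_real_add scale_left_distrib) simp
  finally show ?thesis .
qed

end

locale opsys_p = opsys scl star C e for scl :: "complex \<Rightarrow> 'v::ab_group_add \<Rightarrow> 'v" and star C e +
  fixes p :: 'v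
  assumes pp: "pos1 C p" and pe: "pos1 C (e - p)" and pn: "p \<noteq> 0"
begin

lemma pos_Cp: "pos1 C x \<Longrightarrow> x \<in> Cp scl star C e p"
  unfolding in_Cp
proof (intro conjI allI impI)
  assume x: "pos1 C x"
  then show "star x = x" by (rule pos_herm)
  fix \<epsilon> :: real assume "\<epsilon> > 0"
  have "pos1 C (x + sc \<epsilon> p + sc 1 (e - p))" using x pp pe pos_add pos_sc \<open>\<epsilon> > 0\<close> by simp
  then show "\<exists>t>0. pos1 C (x + sc \<epsilon> p + sc t (e - p))" by (intro exI[of _ 1]) simp
qed

lemma rc: "-p \<notin> Cp scl star C e p \<Longrightarrow> rcone sc {x. star x = x} (Cp scl star C e p) p"
proof (unfold_locales)
  fix a x y show "sc a (x + y) = sc a x + sc a y" by (rule scale_right_distrib)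
next
  fix a b x show "sc (a + b) x = sc a x + sc b x" by (simp add: scale_left_distrib)
next
  fix a b x show "sc a (sc b x) = sc (a * b) x" by simp
next
  fix x show "sc 1 x = x" by simp
next
  fix x y assume "x \<in> {x. star x = x}" "y \<in> {x. star x = x}"
  then show "x + y \<in> {x. star x = x}" by (simp add: star_add)
next
  fix x a assume "x \<in> {x. star x = x}" then show "sc a x \<in> {x. star x = x}" by (simp add: star_sc)
next
  show "Cp scl star C e p \<subseteq> {x. star x = x}" unfolding Cp_def by auto
next
  fix x y assume x: "x \<in> Cp scl star C e p" and y: "y \<in> Cp scl star C e p"
  show "x + y \<in> Cp scl star C e p"
    unfolding in_Cp
  proof (intro conjI allI impI)
    show "star (x + y) = x + y" using x y by (simp add: in_Cp star_add)
    fix \<epsilon> :: real assume "\<epsilon> > 0"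
    then have "\<epsilon>/2 > 0" by simp
    then obtain t1 t2 where t: "t1 > 0" "pos1 C (x + sc (\<epsilon>/2) p + sc t1 (e - p))"
       "t2 > 0" "pos1 C (y + sc (\<epsilon>/2) p + sc t2 (e - p))" using x y unfolding in_Cp by blast
    have PS: "pos1 C ((x + sc (\<epsilon>/2) p + sc t1 (e - p)) + (y + sc (\<epsilon>/2) p + sc t2 (e - p)))"
      using t pos_add by blast
    have EQ: "(x + sc (\<epsilon>/2) p + sc t1 (e - p)) + (y + sc (\<epsilon>/2) p + sc t2 (e - p))
        = x + y + sc \<epsilon> p + sc (t1 + t2) (e - p)"
    proof -
      have "sc \<epsilon> p = sc (\<epsilon>/2) p + sc (\<epsilon>/2) p"
        using scale_left_distrib[of "complex_of_real (\<epsilon>/2)" "complex_of_real (\<epsilon>/2)" p] by simp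
      moreover have "sc (t1 + t2) (e - p) = sc t1 (e - p) + sc t2 (e - p)" by (simp add: scale_left_distrib)
      ultimately show ?thesis by (simp add: algebra_simps)
    qed
    have P: "pos1 C (x + y + sc \<epsilon> p + sc (t1 + t2) (e - p))" using PS unfolding EQ .
    show "\<exists>t>0. pos1 C (x + y + sc \<epsilon> p + sc t (e - p))"
    proof (intro exI conjI)
      show "t1 + t2 > 0" using t by simp
    qed (rule P)
  qed
next
  fix x and a :: real assume x: "x \<in> Cp scl star C e p" and a: "0 \<le> a"
  show "sc a x \<in> Cp scl star C e p"
  proof (cases "a = 0")
    case True
    have "0 \<in> Cp scl star C e p" using pos_Cp pos_zero by blast
    then show ?thesis using True by simp
  next
    case False
    then have a: "a > 0" using a by simp
    show ?thesis unfolding in_Cp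
    proof (intro conjI allI impI)
      show "star (sc a x) = sc a x" using x by (simp add: in_Cp star_sc)
      fix \<epsilon> :: real assume "\<epsilon> > 0"
      then have "\<epsilon>/a > 0" using a by simp
      then obtain t where t: "t > 0" "pos1 C (x + sc (\<epsilon>/a) p + sc t (e - p))" using x unfolding in_Cp by blast
      have "pos1 C (sc a (x + sc (\<epsilon>/a) p + sc t (e - p)))" using pos_sc t a by simp
      moreover have "sc a (x + sc (\<epsilon>/a) p + sc t (e - p)) = sc a x + sc \<epsilon> p + sc (a*t) (e - p)"
        using a by (simp add: scale_right_distrib)
      ultimately show "\<exists>t>0. pos1 C (sc a x + sc \<epsilon> p + sc t (e - p))"
        using t a by (intro exI[of _ "a*t"]) auto
    qed
  qed
next
  show "p \<in> {x. star x = x}" using pos_herm pp by simp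
next
  fix x assume "x \<in> {x. star x = x}"
  then have sx: "star (- x) = - x" by (simp add: star_minus)
  obtain r where r: "r > 0" "pos1 C (sc r e + - x)" using ounit[OF sx] by blast
  show "\<exists>r. sc r p - x \<in> Cp scl star C e p"
  proof (intro exI[of _ r])
    show "sc r p - x \<in> Cp scl star C e p" unfolding in_Cp
    proof (intro conjI allI impI)
      show "star (sc r p - x) = sc r p - x" using \<open>x \<in> {x. star x = x}\<close> pos_herm pp by (simp add: star_diff star_sc)
      fix \<epsilon> :: real assume "\<epsilon> > 0"
      have PS: "pos1 C ((sc r e + - x) + sc \<epsilon> p)" using r pos_add pos_sc pp \<open>\<epsilon> > 0\<close> by simp
      have EQ: "(sc r e + - x) + sc \<epsilon> p = sc r p - x + sc \<epsilon> p + sc r (e - p)"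
        by (simp add: scale_right_diff_distrib algebra_simps)
      have P: "pos1 C (sc r p - x + sc \<epsilon> p + sc r (e - p))" using PS unfolding EQ .
      show "\<exists>t>0. pos1 C (sc r p - x + sc \<epsilon> p + sc t (e - p))"
      proof (intro exI conjI)
        show "r > 0" by (rule r(1))
      qed (rule P)
    qed
  qed
next
  assume "-p \<notin> Cp scl star C e p" then show "-p \<notin> Cp scl star C e p" .
qed


lemma e_Cp_neg: "- (e - p) \<in> Cp scl star C e p"
  unfolding in_Cp
proof (intro conjI allI impI)
  show "star (- (e - p)) = - (e - p)" using pos_herm[OF pe] star_minus[of "e - p"] by simp
  fix \<epsilon> :: real assume "\<epsilon> > 0"
  have PS: "pos1 C (sc \<epsilon> p + (e - p))" using pos_add pos_sc pp pe \<open>\<epsilon> > 0\<close> by simp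
  have EQ: "sc \<epsilon> p + (e - p) = - (e - p) + sc \<epsilon> p + sc 2 (e - p)" unfolding two_sc by (simp add: algebra_simps)
  have P: "pos1 C (- (e - p) + sc \<epsilon> p + sc 2 (e - p))" using PS unfolding EQ .
  show "\<exists>t>0. pos1 C (- (e - p) + sc \<epsilon> p + sc t (e - p))"
  proof (intro exI conjI)
    show "(2::real) > 0" by simp
  qed (rule P)
qed

lemma back_dir: assumes nJ: "p \<notin> Jp scl star C e p" shows "\<exists>\<phi>. is_state scl C e \<phi> \<and> \<phi> p = 1"
proof -
  have pCp: "p \<in> Cp scl star C e p" using pos_Cp pp by blast
  have nm: "- p \<notin> Cp scl star C e p"
  proof
    assume "- p \<in> Cp scl star C e p"
    then have "p \<in> uminus ` Cp scl star C e p" by (intro image_eqI[of _ _ "- p"]) simp_all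
    then have "p \<in> Cp scl star C e p \<inter> uminus ` Cp scl star C e p" using pCp by blast
    then have "p \<in> Jp scl star C e p" unfolding Jp_def by (rule span_base)
    with nJ show False by simp
  qed
  interpret R: rcone sc "{x. star x = x}" "Cp scl star C e p" p using rc[OF nm] .
  obtain f where fadd: "\<forall>x\<in>{x. star x = x}. \<forall>y\<in>{x. star x = x}. f (x+y) = f x + f y"
    and fsc: "\<forall>x\<in>{x. star x = x}. \<forall>r. f (sc r x) = r * f x"
    and fpos: "\<forall>x\<in>Cp scl star C e p. 0 \<le> f x" and fu: "f p = 1" using R.riesz by blast
  have hp: "star p = p" using pos_herm pp by simp
  have hq: "star (e - p) = e - p" using pos_herm pe by simp
  have "0 \<le> f (e - p)" using fpos pos_Cp pe by blast
  moreover have "0 \<le> f (- (e - p))" using fpos e_Cp_neg by blast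
  moreover have "f (- (e - p)) = - f (e - p)"
  proof -
    have "f (sc (-1) (e - p)) = (-1) * f (e - p)" using fsc hq by blast
    moreover have "sc (-1) (e - p) = - (e - p)" by simp
    ultimately show ?thesis by simp
  qed
  ultimately have fq: "f (e - p) = 0" by simp
  have "f e = f (p + (e - p))" by simp
  also have "\<dots> = f p + f (e - p)" using fadd hp hq by blast
  also have "\<dots> = 1" using fu fq by simp
  finally have fe: "f e = 1" .
  obtain \<phi> where st: "is_state scl C e \<phi>" and herm: "\<forall>x. star x = x \<longrightarrow> \<phi> x = complex_of_real (f x)"
    using mk_state[of f] fadd fsc fpos pos_Cp fe by auto
  have "\<phi> p = 1" using herm hp fu by simp
  then show ?thesis using st by blast
qed

lemma exists_state: "\<exists>\<phi>. is_state scl C e \<phi>"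
proof -
  have epos: "pos1 C e" using pos_add[OF pp pe] by simp
  have nm: "- e \<notin> {x. pos1 C x}"
  proof
    assume "- e \<in> {x. pos1 C x}"
    then have "e = 0" using pos_proper epos by simp
    then have "pos1 C (- p)" using pe by simp
    then show False using pos_proper pp pn by blast
  qed
  interpret R: rcone sc "{x. star x = x}" "{x. pos1 C x}" e
  proof (unfold_locales)
    fix a x y show "sc a (x + y) = sc a x + sc a y" by (rule scale_right_distrib)
  next
    fix a b x show "sc (a + b) x = sc a x + sc b x" by (simp add: scale_left_distrib)
  next
    fix a b x show "sc a (sc b x) = sc (a * b) x" by simp
  next
    fix x show "sc 1 x = x" by simp
  next
    fix x y assume "x \<in> {x. star x = x}" "y \<in> {x. star x = x}"
    then show "x + y \<in> {x. star x = x}" by (simp add: star_add)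
  next
    fix x a assume "x \<in> {x. star x = x}" then show "sc a x \<in> {x. star x = x}" by (simp add: star_sc)
  next
    show "{x. pos1 C x} \<subseteq> {x. star x = x}" using pos_herm by auto
  next
    fix x y assume "x \<in> {x. pos1 C x}" "y \<in> {x. pos1 C x}" then show "x + y \<in> {x. pos1 C x}" using pos_add by simp
  next
    fix x and a :: real assume "x \<in> {x. pos1 C x}" "0 \<le> a" then show "sc a x \<in> {x. pos1 C x}" using pos_sc by simp
  next
    show "e \<in> {x. star x = x}" using star_e by simp
  next
    fix x assume "x \<in> {x. star x = x}"
    then have sx: "star (- x) = - x" by (simp add: star_minus)
    obtain r where r: "r > 0" "pos1 C (sc r e + - x)" using ounit[OF sx] by blast
    then show "\<exists>r. sc r e - x \<in> {x. pos1 C x}" by (intro exI[of _ r]) simp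
  next
    show "- e \<notin> {x. pos1 C x}" by (rule nm)
  qed
  obtain f where fadd: "\<forall>x\<in>{x. star x = x}. \<forall>y\<in>{x. star x = x}. f (x+y) = f x + f y"
    and fsc: "\<forall>x\<in>{x. star x = x}. \<forall>r. f (sc r x) = r * f x"
    and fpos: "\<forall>x\<in>{x. pos1 C x}. 0 \<le> f x" and fu: "f e = 1" using R.riesz by blast
  show ?thesis using mk_state[of f] fadd fsc fpos fu by auto
qed

lemma state_p: assumes st: "is_state scl C e \<phi>"
  shows "\<phi> p = complex_of_real (Re (\<phi> p))" "0 \<le> Re (\<phi> p)" "Re (\<phi> p) \<le> 1" "cmod (\<phi> p) = Re (\<phi> p)"
    "\<phi> (e - p) = 1 - \<phi> p"
proof -
  have a: "\<phi> p \<in> \<real>" "0 \<le> Re (\<phi> p)" using state_pos[OF st pp] by auto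
  have q: "\<phi> (e - p) = 1 - \<phi> p" using state_diff[OF st] state_e[OF st] by simp
  have b: "0 \<le> Re (\<phi> (e - p))" using state_pos[OF st pe] by auto
  show "\<phi> p = complex_of_real (Re (\<phi> p))" using a by (simp add: complex_is_Real_iff complex_eq_iff)
  show "0 \<le> Re (\<phi> p)" by (rule a(2))
  show "Re (\<phi> p) \<le> 1" using b q by simp
  show "cmod (\<phi> p) = Re (\<phi> p)" using a by (simp add: complex_is_Real_iff cmod_eq_Re)
  show "\<phi> (e - p) = 1 - \<phi> p" by (rule q)
qed

end

context opsys_p begin

definition SS where "SS = {y. \<forall>\<epsilon>>0. \<exists>M\<ge>0. \<forall>\<phi>. is_state scl C e \<phi> \<longrightarrow> cmod (\<phi> y) \<le> \<epsilon> + M * (1 - Re (\<phi> p))}"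

lemma SS_sub: "subspace SS"
proof (rule subspaceI)
  show "0 \<in> SS" unfolding SS_def
  proof (intro CollectI allI impI exI conjI)
    fix \<epsilon> :: real and \<phi> assume "\<epsilon> > 0" "is_state scl C e \<phi>"
    have "\<phi> 0 = 0" using state_scl[OF \<open>is_state scl C e \<phi>\<close>, of 0 0] by simp
    then show "cmod (\<phi> 0) \<le> \<epsilon> + 0 * (1 - Re (\<phi> p))" using \<open>\<epsilon> > 0\<close> by simp
  qed simp
next
  fix x y assume x: "x \<in> SS" and y: "y \<in> SS"
  show "x + y \<in> SS" unfolding SS_def
  proof (intro CollectI allI impI)
    fix \<epsilon> :: real assume "\<epsilon> > 0"
    then have "\<epsilon>/2 > 0" by simp
    then obtain M1 M2 where M: "M1 \<ge> 0" "M2 \<ge> 0"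
      "\<And>\<phi>. is_state scl C e \<phi> \<Longrightarrow> cmod (\<phi> x) \<le> \<epsilon>/2 + M1 * (1 - Re (\<phi> p))"
      "\<And>\<phi>. is_state scl C e \<phi> \<Longrightarrow> cmod (\<phi> y) \<le> \<epsilon>/2 + M2 * (1 - Re (\<phi> p))"
      using x y unfolding SS_def by blast
    show "\<exists>M\<ge>0. \<forall>\<phi>. is_state scl C e \<phi> \<longrightarrow> cmod (\<phi> (x + y)) \<le> \<epsilon> + M * (1 - Re (\<phi> p))"
    proof (intro exI[of _ "M1 + M2"] conjI allI impI)
      show "M1 + M2 \<ge> 0" using M by simp
      fix \<phi> assume st: "is_state scl C e \<phi>"
      have "cmod (\<phi> (x + y)) \<le> cmod (\<phi> x) + cmod (\<phi> y)" using state_add[OF st] norm_triangle_ineq by simp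
      also have "\<dots> \<le> \<epsilon>/2 + M1 * (1 - Re (\<phi> p)) + (\<epsilon>/2 + M2 * (1 - Re (\<phi> p)))" using M(3,4)[OF st] by simp
      also have "\<dots> = \<epsilon> + (M1 + M2) * (1 - Re (\<phi> p))" by (simp add: algebra_simps)
      finally show "cmod (\<phi> (x + y)) \<le> \<epsilon> + (M1 + M2) * (1 - Re (\<phi> p))" .
    qed
  qed
next
  fix c x assume x: "x \<in> SS"
  show "scl c x \<in> SS" unfolding SS_def
  proof (intro CollectI allI impI)
    fix \<epsilon> :: real assume "\<epsilon> > 0"
    then have "\<epsilon>/(cmod c + 1) > 0" by (simp add: add_nonneg_pos)
    then obtain M where M: "M \<ge> 0"
      "\<And>\<phi>. is_state scl C e \<phi> \<Longrightarrow> cmod (\<phi> x) \<le> \<epsilon>/(cmod c + 1) + M * (1 - Re (\<phi> p))"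
      using x unfolding SS_def by blast
    show "\<exists>M\<ge>0. \<forall>\<phi>. is_state scl C e \<phi> \<longrightarrow> cmod (\<phi> (scl c x)) \<le> \<epsilon> + M * (1 - Re (\<phi> p))"
    proof (intro exI[of _ "cmod c * M"] conjI allI impI)
      show "cmod c * M \<ge> 0" using M by simp
      fix \<phi> assume st: "is_state scl C e \<phi>"
      have s1: "0 \<le> 1 - Re (\<phi> p)" using state_p[OF st] by simp
      have "cmod (\<phi> (scl c x)) = cmod c * cmod (\<phi> x)" using state_scl[OF st] by (simp add: norm_mult)
      also have "\<dots> \<le> cmod c * (\<epsilon>/(cmod c + 1) + M * (1 - Re (\<phi> p)))"
        using M(2)[OF st] by (simp add: mult_left_mono)
      also have "\<dots> = cmod c * (\<epsilon>/(cmod c + 1)) + cmod c * M * (1 - Re (\<phi> p))" by (simp add: algebra_simps)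
      also have "\<dots> \<le> \<epsilon> + cmod c * M * (1 - Re (\<phi> p))"
      proof -
        have "cmod c * (\<epsilon>/(cmod c + 1)) \<le> (cmod c + 1) * (\<epsilon>/(cmod c + 1))"
          using \<open>\<epsilon>/(cmod c + 1) > 0\<close> by (intro mult_right_mono) auto
        also have "\<dots> = \<epsilon>"
        proof -
          have "cmod c + 1 \<noteq> 0" using norm_ge_zero[of c] by linarith
          then show ?thesis by simp
        qed
        finally show ?thesis by simp
      qed
      finally show "cmod (\<phi> (scl c x)) \<le> \<epsilon> + cmod c * M * (1 - Re (\<phi> p))" .
    qed
  qed
qed

lemma N_SS: "Cp scl star C e p \<inter> uminus ` Cp scl star C e p \<subseteq> SS"
proof
  fix x assume "x \<in> Cp scl star C e p \<inter> uminus ` Cp scl star C e p"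
  then have x1: "x \<in> Cp scl star C e p" and x2: "- x \<in> Cp scl star C e p" by auto
  show "x \<in> SS" unfolding SS_def
  proof (intro CollectI allI impI)
    fix \<epsilon> :: real assume ep: "\<epsilon> > 0"
    obtain t1 where t1: "t1 > 0" "pos1 C (x + sc \<epsilon> p + sc t1 (e - p))" using x1 ep unfolding in_Cp by blast
    obtain t2 where t2: "t2 > 0" "pos1 C (- x + sc \<epsilon> p + sc t2 (e - p))" using x2 ep unfolding in_Cp by blast
    show "\<exists>M\<ge>0. \<forall>\<phi>. is_state scl C e \<phi> \<longrightarrow> cmod (\<phi> x) \<le> \<epsilon> + M * (1 - Re (\<phi> p))"
    proof (intro exI[of _ "t1 + t2"] conjI allI impI)
      show "t1 + t2 \<ge> 0" using t1 t2 by simp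
      fix \<phi> assume st: "is_state scl C e \<phi>"
      define s where "s = Re (\<phi> p)"
      have sp: "\<phi> p = complex_of_real s" "0 \<le> s" "s \<le> 1" "\<phi> (e - p) = 1 - complex_of_real s"
        using state_p[OF st] unfolding s_def by simp_all
      have e1: "\<phi> (x + sc \<epsilon> p + sc t1 (e - p)) = \<phi> x + complex_of_real (\<epsilon> * s + t1 * (1 - s))"
        using state_add[OF st] state_scl[OF st] sp by simp
      have e2: "\<phi> (- x + sc \<epsilon> p + sc t2 (e - p)) = - \<phi> x + complex_of_real (\<epsilon> * s + t2 * (1 - s))"
        using state_add[OF st] state_scl[OF st] state_minus[OF st] state_diff[OF st] sp by simp
      have p1: "\<phi> (x + sc \<epsilon> p + sc t1 (e - p)) \<in> \<real>" "0 \<le> Re (\<phi> (x + sc \<epsilon> p + sc t1 (e - p)))"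
        using state_pos[OF st t1(2)] by auto
      have p2: "0 \<le> Re (\<phi> (- x + sc \<epsilon> p + sc t2 (e - p)))"
        using state_pos[OF st t2(2)] by auto
      have im: "Im (\<phi> x) = 0" using p1(1) e1 by (simp add: complex_is_Real_iff)
      have r1: "0 \<le> Re (\<phi> x) + (\<epsilon> * s + t1 * (1 - s))" using p2 p1(2) e1 by simp
      have r2: "0 \<le> - Re (\<phi> x) + (\<epsilon> * s + t2 * (1 - s))" using p2 e2 by simp
      have a1: "\<epsilon> * s \<le> \<epsilon>" using ep sp by (simp add: mult_left_le)
      have a2: "t1 * (1 - s) \<le> (t1 + t2) * (1 - s)" using t2 sp by (intro mult_right_mono) auto
      have a3: "t2 * (1 - s) \<le> (t1 + t2) * (1 - s)" using t1 sp by (intro mult_right_mono) auto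
      have "cmod (\<phi> x) = \<bar>Re (\<phi> x)\<bar>" using im by (simp add: cmod_eq_Re)
      also have "\<dots> \<le> \<epsilon> + (t1 + t2) * (1 - s)" using r1 r2 a1 a2 a3 by linarith
      finally show "cmod (\<phi> x) \<le> \<epsilon> + (t1 + t2) * (1 - Re (\<phi> p))" unfolding s_def .
    qed
  qed
qed

lemma fwd: assumes "p \<in> Jp scl star C e p" shows "alpha_m scl C e p \<noteq> 1"
proof -
  have "Jp scl star C e p \<subseteq> SS" unfolding Jp_def by (rule span_minimal[OF N_SS SS_sub])
  then have "p \<in> SS" using assms by blast
  then obtain M where M: "M \<ge> 0" "\<And>\<phi>. is_state scl C e \<phi> \<Longrightarrow> cmod (\<phi> p) \<le> 1/2 + M * (1 - Re (\<phi> p))"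
  proof -
    have "\<forall>\<epsilon>>0. \<exists>M\<ge>0. \<forall>\<phi>. is_state scl C e \<phi> \<longrightarrow> cmod (\<phi> p) \<le> \<epsilon> + M * (1 - Re (\<phi> p))"
      using \<open>p \<in> SS\<close> unfolding SS_def by simp
    then have "\<exists>M\<ge>0. \<forall>\<phi>. is_state scl C e \<phi> \<longrightarrow> cmod (\<phi> p) \<le> 1/2 + M * (1 - Re (\<phi> p))"
      by (erule_tac x="1/2" in allE) simp
    then show ?thesis using that by blast
  qed
  define b where "b = (M + 1/2) / (M + 1)"
  have b1: "b < 1" unfolding b_def using M(1) by (simp add: divide_less_eq)
  have le: "cmod (\<phi> p) \<le> b" if st: "is_state scl C e \<phi>" for \<phi>
  proof -
    have "Re (\<phi> p) \<le> 1/2 + M * (1 - Re (\<phi> p))" using M(2)[OF st] state_p(4)[OF st] by simp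
    then have "Re (\<phi> p) * (M + 1) \<le> M + 1/2" by (simp add: algebra_simps)
    then have "Re (\<phi> p) \<le> b" unfolding b_def using M(1) by (simp add: pos_le_divide_eq)
    then show ?thesis using state_p(4)[OF st] by simp
  qed
  obtain \<phi>0 where "is_state scl C e \<phi>0" using exists_state by blast
  then have ne: "{cmod (\<phi> p) | \<phi>. is_state scl C e \<phi>} \<noteq> {}" by blast
  have "alpha_m scl C e p \<le> b" unfolding alpha_m_def using le ne by (intro cSup_least) auto
  then show ?thesis using b1 by simp
qed

lemma bwd: assumes "p \<notin> Jp scl star C e p" shows "alpha_m scl C e p = 1"
proof -
  obtain \<phi> where st: "is_state scl C e \<phi>" and "\<phi> p = 1" using back_dir[OF assms] by blast
  then have "1 \<in> {cmod (\<phi> p) | \<phi>. is_state scl C e \<phi>}" by force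
  moreover have "\<And>y. y \<in> {cmod (\<phi> p) | \<phi>. is_state scl C e \<phi>} \<Longrightarrow> y \<le> 1"
    using state_p(3,4) by auto
  ultimately show ?thesis unfolding alpha_m_def by (rule cSup_eq_maximum)
qed

end

theorem proposition4p8:
  fixes scl :: "complex \<Rightarrow> 'v::ab_group_add \<Rightarrow> 'v"
    and star :: "'v \<Rightarrow> 'v"
    and C :: "nat \<Rightarrow> (nat \<Rightarrow> nat \<Rightarrow> 'v) set"
    and e p :: 'v
  assumes "operator_system scl star C e"
    and "pos1 C p" and "pos1 C (e - p)" and "p \<noteq> 0"
  shows "alpha_m scl C e p = 1 \<longleftrightarrow> p \<notin> Jp scl star C e p"
proof -
  interpret opsys_p scl star C e p
    by (unfold_locales) (use assms in auto)
  show ?thesis using fwd bwd by blast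
qed


end
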